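(* Let $\widehat U=(\widehat h,\widehat{q^x},\widehat{q^y})$ be a smooth solution of the stochastic Galerkin shallow water system with smooth time-independent bottom $\widehat B(x,y)$, such that $\mathcal P(\widehat h)$ is invertible everywhere. Define $E(\widehat U)=\tfrac12\big((\widehat{q^x})^\top\widehat u+(\widehat{q^y})^\top\widehat v\big)+\tfrac12 g\|\widehat h\|^2+g\,\widehat h^\top\widehat B$, $H(\widehat U)=\tfrac12\big(\widehat u^\top\mathcal P(\widehat{q^x})\widehat u+\widehat v^\top\mathcal P(\widehat{q^x})\widehat v\big)+g(\widehat{q^x})^\top(\widehat h+\widehat B)$, $K(\widehat U)=\tfrac12\big(\widehat v^\top\mathcal P(\widehat{q^y})\widehat v+\widehat u^\top\mathcal P(\widehat{q^y})\widehat u\big)+g(\widehat{q^y})^\top(\widehat h+\widehat B)$. Then $E(\widehat U)_t+H(\widehat U)_x+K(\widehat U)_y=0$.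
   Context: Let $\xi$ be a random variable in $\mathbb R^d$ with density $\rho$ having finite moments of all orders, and let $\phi_1\equiv1,\phi_2,\dots,\phi_K$ be polynomials orthonormal in $L^2_\rho$. For $k=1,\dots,K$ let $\mathcal M_k\in\mathbb R^{K\times K}$ with $(\mathcal M_k)_{l,m}=\int\phi_k\phi_l\phi_m\rho$, and for $\widehat z\in\mathbb R^K$ set $\mathcal P(\widehat z)=\sum_{k=1}^K\widehat z_k\mathcal M_k$. Let $g>0$. The stochastic Galerkin shallow water system is $\widehat U_t+\widehat F(\widehat U)_x+\widehat G(\widehat U)_y=\widehat S(\widehat U)$ for $\widehat U(x,y,t)=(\widehat h,\widehat{q^x},\widehat{q^y})\in\mathbb R^{3K}$ with $\widehat F=\big(\widehat{q^x};\ \mathcal P(\widehat{q^x})\mathcal P^{-1}(\widehat h)\widehat{q^x}+\tfrac12 g\mathcal P(\widehat h)\widehat h;\ \mathcal P(\widehat{q^x})\mathcal P^{-1}(\widehat h)\widehat{q^y}\big)$, $\widehat G=\big(\widehat{q^y};\ \mathcal P(\widehat{q^y})\mathcal P^{-1}(\widehat h)\widehat{q^x};\ \mathcal P(\widehat{q^y})\mathcal P^{-1}(\widehat h)\widehat{q^y}+\tfrac12 g\mathcal P(\widehat h)\widehat h\big)$, $\widehat S=\big(0;\ -g\mathcal P(\widehat h)\widehat B_x;\ -g\mathcal P(\widehat h)\widehat B_y\big)$ ($K$-blocks separated by semicolons), and $\widehat u=\mathcal P^{-1}(\widehat h)\widehat{q^x}$, $\widehat v=\mathcal P^{-1}(\widehat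 h)\widehat{q^y}$. *)

theory Defs
  imports "HOL-Analysis.Analysis"
begin

text \<open>Vectors in R^K are functions nat => real, only indices 1..K matter;
  K x K matrices are functions nat => nat => real, only indices in 1..K matter.\<close>

definition dotK :: "nat \<Rightarrow> (nat \<Rightarrow> real) \<Rightarrow> (nat \<Rightarrow> real) \<Rightarrow> real" where
  "dotK K a b = (\<Sum>k=1..K. a k * b k)"

definition mvK :: "nat \<Rightarrow> (nat \<Rightarrow> nat \<Rightarrow> real) \<Rightarrow> (nat \<Rightarrow> real) \<Rightarrow> (nat \<Rightarrow> real)" where
  "mvK K A v = (\<lambda>l. \<Sum>m=1..K. A l m * v m)"

definition mmK :: "nat \<Rightarrow> (nat \<Rightarrow> nat \<Rightarrow> real) \<Rightarrow> (nat \<Rightarrow> nat \<Rightarrow> real) \<Rightarrow> (nat \<Rightarrow> nat \<Rightarrow> real)" where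
  "mmK K A B = (\<lambda>i j. \<Sum>m=1..K. A i m * B m j)"

definition idK :: "nat \<Rightarrow> nat \<Rightarrow> nat \<Rightarrow> real" where
  "idK K = (\<lambda>i j. if i = j \<and> i \<in> {1..K} then 1 else 0)"

definition is_invK :: "nat \<Rightarrow> (nat \<Rightarrow> nat \<Rightarrow> real) \<Rightarrow> (nat \<Rightarrow> nat \<Rightarrow> real) \<Rightarrow> bool" where
  "is_invK K A B \<longleftrightarrow> (\<forall>i j. (i \<notin> {1..K} \<or> j \<notin> {1..K}) \<longrightarrow> B i j = 0)
     \<and> (\<forall>i\<in>{1..K}. \<forall>j\<in>{1..K}. mmK K A B i j = idK K i j \<and> mmK K B A i j = idK K i j)"

definition invertibleK :: "nat \<Rightarrow> (nat \<Rightarrow> nat \<Rightarrow> real) \<Rightarrow> bool" where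
  "invertibleK K A \<longleftrightarrow> (\<exists>B. is_invK K A B)"

definition invK :: "nat \<Rightarrow> (nat \<Rightarrow> nat \<Rightarrow> real) \<Rightarrow> (nat \<Rightarrow> nat \<Rightarrow> real)" where
  "invK K A = (THE B. is_invK K A B)"

definition poly_fun :: "(real^'d::finite \<Rightarrow> real) \<Rightarrow> bool" where
  "poly_fun f \<longleftrightarrow> (\<exists>S :: ('d \<Rightarrow> nat) set. \<exists>c. finite S \<and>
      (\<forall>x. f x = (\<Sum>\<alpha>\<in>S. c \<alpha> * (\<Prod>i\<in>UNIV. (x $ i) ^ \<alpha> i))))"

definition Mtrip :: "(nat \<Rightarrow> real^'d::finite \<Rightarrow> real) \<Rightarrow> (real^'d \<Rightarrow> real) \<Rightarrow> nat \<Rightarrow> nat \<Rightarrow> nat \<Rightarrow> real" where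
  "Mtrip \<phi> \<rho> k l m = (\<integral>\<xi>. \<phi> k \<xi> * \<phi> l \<xi> * \<phi> m \<xi> * \<rho> \<xi> \<partial>lborel)"

definition PK :: "(nat \<Rightarrow> real^'d::finite \<Rightarrow> real) \<Rightarrow> (real^'d \<Rightarrow> real) \<Rightarrow> nat \<Rightarrow> (nat \<Rightarrow> real) \<Rightarrow> (nat \<Rightarrow> nat \<Rightarrow> real)" where
  "PK \<phi> \<rho> K z = (\<lambda>l m. \<Sum>k=1..K. z k * Mtrip \<phi> \<rho> k l m)"

coinductive smooth_fun :: "('a::real_normed_vector \<Rightarrow> real) \<Rightarrow> bool" where
  "f differentiable_on UNIV \<Longrightarrow> (\<And>v. smooth_fun (\<lambda>p. frechet_derivative f (at p) v))
     \<Longrightarrow> smooth_fun f"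

end

theory Submission
  imports Defs "Jordan_Normal_Form.Determinant"
begin


definition JM :: "nat \<Rightarrow> (nat \<Rightarrow> nat \<Rightarrow> real) \<Rightarrow> real mat" where
  "JM K A = mat K K (\<lambda>(i,j). A (Suc i) (Suc j))"

lemma sum_shift1: "(\<Sum>k=0..<K. f (Suc k)) = (\<Sum>m=1..K. f m :: real)"
proof -
  have "(\<Sum>m=1..K. f m) = (\<Sum>m=Suc 0..<Suc K. f m)"
    by (simp add: atLeastLessThanSuc_atLeastAtMost)
  also have "\<dots> = (\<Sum>k=0..<K. f (Suc k))" by (rule sum.shift_bounds_Suc_ivl)
  finally show ?thesis by simp
qed

lemma JM_carrier[simp]: "JM K A \<in> carrier_mat K K" by (simp add: JM_def)

lemma JM_dims[simp]: "dim_row (JM K A) = K" "dim_col (JM K A) = K" by (simp_all add: JM_def)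

lemma JM_index[simp]: "i < K \<Longrightarrow> j < K \<Longrightarrow> JM K A $$ (i,j) = A (Suc i) (Suc j)"
  by (simp add: JM_def)

lemma JM_mult: "i < K \<Longrightarrow> j < K \<Longrightarrow> (JM K A * JM K B) $$ (i,j) = mmK K A B (Suc i) (Suc j)"
  using sum_shift1[where K=K and f="\<lambda>m. A (Suc i) m * B m (Suc j)"]
  by (simp add: JM_def mmK_def scalar_prod_def)

lemma is_invK_JM:
  assumes "is_invK K A B"
  shows "JM K A * JM K B = 1\<^sub>m K" "JM K B * JM K A = 1\<^sub>m K"
proof -
  show "JM K A * JM K B = 1\<^sub>m K"
  proof (rule eq_matI)
    fix i j assume "i < dim_row (1\<^sub>m K)" "j < dim_col (1\<^sub>m K)"
    then show "(JM K A * JM K B) $$ (i, j) = 1\<^sub>m K $$ (i, j)"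
      using assms by (simp add: JM_mult is_invK_def idK_def del: index_mult_mat)
  qed auto
  show "JM K B * JM K A = 1\<^sub>m K"
  proof (rule eq_matI)
    fix i j assume "i < dim_row (1\<^sub>m K)" "j < dim_col (1\<^sub>m K)"
    then show "(JM K B * JM K A) $$ (i, j) = 1\<^sub>m K $$ (i, j)"
      using assms by (simp add: JM_mult is_invK_def idK_def del: index_mult_mat)
  qed auto
qed

lemma JM_is_invK:
  assumes "\<And>i j. (i \<notin> {1..K} \<or> j \<notin> {1..K}) \<Longrightarrow> B i j = 0"
    and "JM K A * JM K B = 1\<^sub>m K" "JM K B * JM K A = 1\<^sub>m K"
  shows "is_invK K A B"
  unfolding is_invK_def
proof (intro conjI allI impI ballI)
  fix i j assume "i \<notin> {1..K} \<or> j \<notin> {1..K}" then show "B i j = 0" using assms(1) by blast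
next
  fix i j assume i: "i \<in> {1..K}" and j: "j \<in> {1..K}"
  then obtain i' j' where ij: "i = Suc i'" "j = Suc j'" "i' < K" "j' < K"
    by (metis Suc_le_eq atLeastAtMost_iff not0_implies_Suc not_one_le_zero)
  show "mmK K A B i j = idK K i j" using JM_mult[OF ij(3,4), of A B] assms(2) ij
    by (simp add: idK_def)
  show "mmK K B A i j = idK K i j" using JM_mult[OF ij(3,4), of B A] assms(3) ij
    by (simp add: idK_def)
qed

lemma JM_eq_imp:
  assumes "JM K B1 = JM K B2"
    and "\<And>i j. (i \<notin> {1..K} \<or> j \<notin> {1..K}) \<Longrightarrow> B1 i j = 0"
    and "\<And>i j. (i \<notin> {1..K} \<or> j \<notin> {1..K}) \<Longrightarrow> B2 i j = 0"
  shows "B1 = B2"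
proof (intro ext)
  fix i j
  show "B1 i j = B2 i j"
  proof (cases "i \<in> {1..K} \<and> j \<in> {1..K}")
    case True
    then obtain i' j' where ij: "i = Suc i'" "j = Suc j'" "i' < K" "j' < K"
      by (metis Suc_le_eq atLeastAtMost_iff not0_implies_Suc not_one_le_zero)
    have "JM K B1 $$ (i',j') = JM K B2 $$ (i',j')" using assms(1) by simp
    then show ?thesis using ij by simp
  next
    case False
    then have "i \<notin> {1..K} \<or> j \<notin> {1..K}" by blast
    then show ?thesis using assms(2,3) by metis
  qed
qed

lemma is_invK_unique:
  assumes "is_invK K A B1" "is_invK K A B2" shows "B1 = B2"
proof (rule JM_eq_imp)
  have "JM K B2 = JM K B2 * (JM K A * JM K B1)"
    using is_invK_JM(1)[OF assms(1)] right_mult_one_mat[OF JM_carrier[of K B2]] by simp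
  also have "\<dots> = (JM K B2 * JM K A) * JM K B1"
    by (rule assoc_mult_mat[symmetric]) auto
  also have "\<dots> = JM K B1" using is_invK_JM(2)[OF assms(2)] by simp
  finally show "JM K B1 = JM K B2" by simp
qed (use assms in \<open>auto simp: is_invK_def\<close>)

lemma invK_eq: "is_invK K A B \<Longrightarrow> invK K A = B"
  unfolding invK_def by (rule the_equality) (auto intro: is_invK_unique)

lemma invK_is: "invertibleK K A \<Longrightarrow> is_invK K A (invK K A)"
  unfolding invertibleK_def using invK_eq by metis

lemma det_nz: assumes "invertibleK K A" shows "det (JM K A) \<noteq> 0"
proof -
  obtain B where B: "is_invK K A B" using assms unfolding invertibleK_def by blast
  have "det (JM K A * JM K B) = det (JM K A) * det (JM K B)"
    by (rule det_mult[of _ K]) auto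
  then have "det (JM K A) * det (JM K B) = 1" using is_invK_JM(1)[OF B] by simp
  then show ?thesis by auto
qed

lemma smult_inv_one: "(d::real) \<noteq> 0 \<Longrightarrow> (1/d) \<cdot>\<^sub>m (d \<cdot>\<^sub>m 1\<^sub>m K) = 1\<^sub>m K"
  by (rule eq_matI) auto

lemma invK_formula:
  assumes inv: "invertibleK K A" and i: "i \<in> {1..K}" and j: "j \<in> {1..K}"
  shows "invK K A i j = adj_mat (JM K A) $$ (i - 1, j - 1) / det (JM K A)"
proof -
  define d where "d = det (JM K A)"
  have d: "d \<noteq> 0" using det_nz[OF inv] d_def by simp
  define C where "C = (\<lambda>i j. if i \<in> {1..K} \<and> j \<in> {1..K}
        then adj_mat (JM K A) $$ (i - 1, j - 1) / d else 0)"
  have JC: "JM K C = (1/d) \<cdot>\<^sub>m adj_mat (JM K A)"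
  proof (rule eq_matI)
    fix a b assume "a < dim_row ((1/d) \<cdot>\<^sub>m adj_mat (JM K A))" "b < dim_col ((1/d) \<cdot>\<^sub>m adj_mat (JM K A))"
    then have "a < K" "b < K" using adj_mat(1)[OF JM_carrier[of K A]] by auto
    then show "JM K C $$ (a, b) = ((1/d) \<cdot>\<^sub>m adj_mat (JM K A)) $$ (a, b)"
      using adj_mat(1)[OF JM_carrier[of K A]] by (simp add: C_def)
  qed (use adj_mat(1)[OF JM_carrier[of K A]] in auto)
  have adjc: "adj_mat (JM K A) \<in> carrier_mat K K" by (rule adj_mat(1)) simp
  have "JM K A * JM K C = 1\<^sub>m K"
    unfolding JC using adj_mat(2)[OF JM_carrier[of K A]] d adjc
    by (simp add: mult_smult_distrib[of _ K K _ K] d_def smult_inv_one)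
  moreover have "JM K C * JM K A = 1\<^sub>m K"
    unfolding JC using adj_mat(3)[OF JM_carrier[of K A]] d adjc
    by (simp add: mult_smult_assoc_mat[of _ K K _ K] d_def smult_inv_one)
  ultimately have "is_invK K A C" by (intro JM_is_invK) (auto simp: C_def)
  then have "invK K A = C" by (rule invK_eq)
  then show ?thesis using i j by (simp add: C_def d_def)
qed



lemma differentiable_prod_fin:
  fixes f :: "'b \<Rightarrow> real \<Rightarrow> real"
  assumes "finite S" "\<forall>a\<in>S. (\<lambda>s. f a s) differentiable (at x)"
  shows "(\<lambda>s. \<Prod>a\<in>S. f a s) differentiable (at x)"
  using assms by (induction S rule: finite_induct) (auto intro!: differentiable_mult)

lemma det_mat_diff:
  assumes "\<And>i j. i < n \<Longrightarrow> j < n \<Longrightarrow> (\<lambda>s. f s i j) differentiable (at (s0::real))"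
  shows "(\<lambda>s. det (mat n n (\<lambda>(i,j). f s i j) :: real mat)) differentiable (at s0)"
proof -
  have eq: "(\<lambda>s. det (mat n n (\<lambda>(i,j). f s i j) :: real mat))
      = (\<lambda>s. \<Sum>p\<in>{p. p permutes {0..<n}}. signof p * (\<Prod>i=0..<n. f s i (p i)))"
    apply (rule ext) unfolding det_def
    by (auto intro!: sum.cong prod.cong simp: permutes_in_image)
  show ?thesis unfolding eq
    apply (rule differentiable_sum)
     apply (simp add: finite_permutations)
    apply (intro ballI differentiable_mult differentiable_const differentiable_prod_fin)
     apply simp
    using assms by (auto simp: permutes_in_image)
qed

lemma JM_delete: "i < K \<Longrightarrow> j < K \<Longrightarrow> mat_delete (JM K A) i j
   = mat (K-1) (K-1) (\<lambda>(a,b). A (Suc (if a < i then a else Suc a)) (Suc (if b < j then b else Suc b)))"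
  by (rule eq_matI) (auto simp: mat_delete_def JM_def)

lemma det_JM_diff:
  assumes "\<And>i j. i \<in> {1..K} \<Longrightarrow> j \<in> {1..K} \<Longrightarrow> (\<lambda>s. A s i j) differentiable (at (s0::real))"
  shows "(\<lambda>s. det (JM K (A s))) differentiable (at s0)"
  unfolding JM_def by (rule det_mat_diff) (auto intro: assms)

lemma adj_JM_diff:
  assumes "\<And>i j. i \<in> {1..K} \<Longrightarrow> j \<in> {1..K} \<Longrightarrow> (\<lambda>s. A s i j) differentiable (at (s0::real))"
    and "i < K" "j < K"
  shows "(\<lambda>s. adj_mat (JM K (A s)) $$ (i,j)) differentiable (at s0)"
proof -
  have eq: "(\<lambda>s. adj_mat (JM K (A s)) $$ (i,j)) = (\<lambda>s. (-1)^(j+i) *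
     det (mat (K-1) (K-1) (\<lambda>(a,b). A s (Suc (if a < j then a else Suc a)) (Suc (if b < i then b else Suc b)))))"
    using assms(2,3) by (simp add: adj_mat_def cofactor_def JM_delete)
  show ?thesis unfolding eq
    by (intro differentiable_mult differentiable_const det_mat_diff assms(1)) auto
qed

lemma invK_diff:
  assumes inv: "\<And>s. invertibleK K (A s)"
    and d: "\<And>i j. i \<in> {1..K} \<Longrightarrow> j \<in> {1..K} \<Longrightarrow> (\<lambda>s. A s i j) differentiable (at (s0::real))"
    and i: "i \<in> {1..K}" and j: "j \<in> {1..K}"
  shows "(\<lambda>s. invK K (A s) i j) differentiable (at s0)"
proof -
  have eq: "(\<lambda>s. invK K (A s) i j) = (\<lambda>s. adj_mat (JM K (A s)) $$ (i - 1, j - 1) / det (JM K (A s)))"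
    using invK_formula[OF inv i j] by auto
  show ?thesis unfolding eq
    using i j by (intro differentiable_divide adj_JM_diff det_JM_diff d det_nz inv) auto
qed



lemma DERIV_dotK:
  assumes "\<And>k. k \<in> {1..K} \<Longrightarrow> ((\<lambda>s. a s k) has_real_derivative a' k) (at s0)"
    and "\<And>k. k \<in> {1..K} \<Longrightarrow> ((\<lambda>s. b s k) has_real_derivative b' k) (at s0)"
  shows "((\<lambda>s. dotK K (a s) (b s)) has_real_derivative (dotK K a' (b s0) + dotK K (a s0) b')) (at s0)"
proof -
  have "((\<lambda>s. \<Sum>k=1..K. a s k * b s k) has_real_derivative (\<Sum>k=1..K. a' k * b s0 k + b' k * a s0 k)) (at s0)"
    by (intro DERIV_sum DERIV_mult assms)
  then show ?thesis unfolding dotK_def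
    by (rule DERIV_cong) (simp add: sum.distrib mult.commute)
qed

lemma DERIV_mvK:
  assumes "\<And>m. m \<in> {1..K} \<Longrightarrow> ((\<lambda>s. M s l m) has_real_derivative M' l m) (at s0)"
    and "\<And>k. k \<in> {1..K} \<Longrightarrow> ((\<lambda>s. w s k) has_real_derivative w' k) (at s0)"
  shows "((\<lambda>s. mvK K (M s) (w s) l) has_real_derivative (mvK K M' (w s0) l + mvK K (M s0) w' l)) (at s0)"
proof -
  have "((\<lambda>s. \<Sum>m=1..K. M s l m * w s m) has_real_derivative (\<Sum>m=1..K. M' l m * w s0 m + w' m * M s0 l m)) (at s0)"
    by (intro DERIV_sum DERIV_mult assms)
  then show ?thesis unfolding mvK_def
    by (rule DERIV_cong) (simp add: sum.distrib mult.commute)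
qed

lemma DERIV_PK:
  assumes "\<And>k. k \<in> {1..K} \<Longrightarrow> ((\<lambda>s. z s k) has_real_derivative z' k) (at s0)"
  shows "((\<lambda>s. PK \<phi> \<rho> K (z s) l m) has_real_derivative PK \<phi> \<rho> K z' l m) (at s0)"
  unfolding PK_def
  by (intro DERIV_sum DERIV_cong[OF DERIV_mult[OF assms DERIV_const]]) simp_all

lemma DERIV_PKmv:
  assumes "\<And>k. k \<in> {1..K} \<Longrightarrow> ((\<lambda>s. z s k) has_real_derivative z' k) (at s0)"
    and "\<And>k. k \<in> {1..K} \<Longrightarrow> ((\<lambda>s. w s k) has_real_derivative w' k) (at s0)"
  shows "((\<lambda>s. mvK K (PK \<phi> \<rho> K (z s)) (w s) l) has_real_derivative
      (mvK K (PK \<phi> \<rho> K z') (w s0) l + mvK K (PK \<phi> \<rho> K (z s0)) w' l)) (at s0)"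
  by (intro DERIV_mvK DERIV_PK assms)

lemma mv_inv:
  assumes "is_invK K A C" "l \<in> {1..K}"
  shows "mvK K A (mvK K C q) l = q l"
proof -
  have "mvK K A (mvK K C q) l = (\<Sum>m=1..K. \<Sum>n=1..K. A l m * (C m n * q n))"
    by (simp add: mvK_def sum_distrib_left)
  also have "\<dots> = (\<Sum>n=1..K. \<Sum>m=1..K. A l m * (C m n * q n))" by (rule sum.swap)
  also have "\<dots> = (\<Sum>n=1..K. mmK K A C l n * q n)"
    by (simp add: mmK_def sum_distrib_right mult.assoc)
  also have "\<dots> = (\<Sum>n=1..K. idK K l n * q n)"
    using assms by (intro sum.cong) (auto simp: is_invK_def)
  also have "\<dots> = (\<Sum>n=1..K. if l = n then q l else 0)"
    by (intro sum.cong) (auto simp: idK_def)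
  also have "\<dots> = q l" using assms(2) by simp
  finally show ?thesis .
qed

lemma line:
  fixes H Q U :: "real \<Rightarrow> nat \<Rightarrow> real"
  assumes inv: "\<And>s. invertibleK K (PK \<phi> \<rho> K (H s))"
    and U: "\<And>s. U s = mvK K (invK K (PK \<phi> \<rho> K (H s))) (Q s)"
    and dH: "\<And>k. k \<in> {1..K} \<Longrightarrow> (\<lambda>s. H s k) differentiable (at s0)"
    and dQ: "\<And>k. k \<in> {1..K} \<Longrightarrow> (\<lambda>s. Q s k) differentiable (at s0)"
  shows "\<And>k. k \<in> {1..K} \<Longrightarrow> ((\<lambda>s. U s k) has_real_derivative deriv (\<lambda>s. U s k) s0) (at s0)"
    and "\<And>l. l \<in> {1..K} \<Longrightarrow> mvK K (PK \<phi> \<rho> K (H s0)) (U s0) l = Q s0 l"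
    and "\<And>l. l \<in> {1..K} \<Longrightarrow> mvK K (PK \<phi> \<rho> K (\<lambda>k. deriv (\<lambda>s. H s k) s0)) (U s0) l
          + mvK K (PK \<phi> \<rho> K (H s0)) (\<lambda>k. deriv (\<lambda>s. U s k) s0) l = deriv (\<lambda>s. Q s l) s0"
proof -
  have R0: "mvK K (PK \<phi> \<rho> K (H s)) (U s) l = Q s l" if "l \<in> {1..K}" for s l
    unfolding U using mv_inv[OF invK_is[OF inv] that] .
  then show "\<And>l. l \<in> {1..K} \<Longrightarrow> mvK K (PK \<phi> \<rho> K (H s0)) (U s0) l = Q s0 l" .
  have dP: "(\<lambda>s. PK \<phi> \<rho> K (H s) i j) differentiable (at s0)" for i j
    unfolding PK_def
    by (intro differentiable_sum ballI differentiable_mult differentiable_const dH) auto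
  have dU: "(\<lambda>s. U s k) differentiable (at s0)" if k: "k \<in> {1..K}" for k
  proof -
    have "(\<lambda>s. U s k) = (\<lambda>s. \<Sum>m=1..K. invK K (PK \<phi> \<rho> K (H s)) k m * Q s m)"
      by (rule ext) (simp add: U mvK_def)
    then show ?thesis
      using k by (auto intro!: differentiable_sum differentiable_mult invK_diff inv dP dQ)
  qed
  show DU: "\<And>k. k \<in> {1..K} \<Longrightarrow> ((\<lambda>s. U s k) has_real_derivative deriv (\<lambda>s. U s k) s0) (at s0)"
    using dU DERIV_deriv_iff_real_differentiable by blast
  have DH: "\<And>k. k \<in> {1..K} \<Longrightarrow> ((\<lambda>s. H s k) has_real_derivative deriv (\<lambda>s. H s k) s0) (at s0)"
    using dH DERIV_deriv_iff_real_differentiable by blast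
  fix l assume l: "l \<in> {1..K}"
  have "((\<lambda>s. mvK K (PK \<phi> \<rho> K (H s)) (U s) l) has_real_derivative
      (mvK K (PK \<phi> \<rho> K (\<lambda>k. deriv (\<lambda>s. H s k) s0)) (U s0) l + mvK K (PK \<phi> \<rho> K (H s0)) (\<lambda>k. deriv (\<lambda>s. U s k) s0) l)) (at s0)"
    by (rule DERIV_PKmv[where z=H and w=U]) (auto intro: DH DU)
  moreover have "(\<lambda>s. mvK K (PK \<phi> \<rho> K (H s)) (U s) l) = (\<lambda>s. Q s l)"
    using R0[OF l] by auto
  ultimately show "mvK K (PK \<phi> \<rho> K (\<lambda>k. deriv (\<lambda>s. H s k) s0)) (U s0) l
          + mvK K (PK \<phi> \<rho> K (H s0)) (\<lambda>k. deriv (\<lambda>s. U s k) s0) l = deriv (\<lambda>s. Q s l) s0"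
    using DERIV_imp_deriv by metis
qed

lemma Mtrip_sym: "Mtrip \<phi> \<rho> k l m = Mtrip \<phi> \<rho> l k m" "Mtrip \<phi> \<rho> k l m = Mtrip \<phi> \<rho> k m l"
  "Mtrip \<phi> \<rho> k l m = Mtrip \<phi> \<rho> m l k"
  unfolding Mtrip_def by (simp_all add: mult_ac)

lemma PK_sym: "PK \<phi> \<rho> K z l m = PK \<phi> \<rho> K z m l"
  unfolding PK_def by (metis Mtrip_sym(2))

lemma P_swap: "mvK K (PK \<phi> \<rho> K a) b = mvK K (PK \<phi> \<rho> K b) a"
proof (rule ext)
  fix l
  have "mvK K (PK \<phi> \<rho> K a) b l = (\<Sum>m=1..K. \<Sum>k=1..K. a k * Mtrip \<phi> \<rho> k l m * b m)"
    by (simp add: mvK_def PK_def sum_distrib_right)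
  also have "\<dots> = (\<Sum>k=1..K. \<Sum>m=1..K. a k * Mtrip \<phi> \<rho> k l m * b m)" by (rule sum.swap)
  also have "\<dots> = (\<Sum>k=1..K. \<Sum>m=1..K. b m * Mtrip \<phi> \<rho> m l k * a k)"
    by (intro sum.cong refl) (metis Mtrip_sym(3) mult.commute mult.assoc)
  also have "\<dots> = mvK K (PK \<phi> \<rho> K b) a l"
    by (simp add: mvK_def PK_def sum_distrib_right)
  finally show "mvK K (PK \<phi> \<rho> K a) b l = mvK K (PK \<phi> \<rho> K b) a l" .
qed

lemma Q_sym: "dotK K a (mvK K (PK \<phi> \<rho> K z) b) = dotK K b (mvK K (PK \<phi> \<rho> K z) a)"
proof -
  have "dotK K a (mvK K (PK \<phi> \<rho> K z) b) = (\<Sum>l=1..K. \<Sum>m=1..K. a l * PK \<phi> \<rho> K z l m * b m)"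
    by (simp add: dotK_def mvK_def sum_distrib_left mult.assoc)
  also have "\<dots> = (\<Sum>m=1..K. \<Sum>l=1..K. a l * PK \<phi> \<rho> K z l m * b m)" by (rule sum.swap)
  also have "\<dots> = (\<Sum>m=1..K. \<Sum>l=1..K. b m * PK \<phi> \<rho> K z m l * a l)"
    by (intro sum.cong refl) (metis PK_sym mult.commute mult.assoc)
  also have "\<dots> = dotK K b (mvK K (PK \<phi> \<rho> K z) a)"
    by (simp add: dotK_def mvK_def sum_distrib_left mult.assoc)
  finally show ?thesis .
qed

lemma dot_comm: "dotK K a b = dotK K b a"
  by (simp add: dotK_def mult.commute)

lemma dot_cong: "(\<And>k. k \<in> {1..K} \<Longrightarrow> a k = a' k) \<Longrightarrow> (\<And>k. k \<in> {1..K} \<Longrightarrow> b k = b' k)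
   \<Longrightarrow> dotK K a b = dotK K a' b'"
  unfolding dotK_def by (intro sum.cong) auto

lemma dot_add_r: "dotK K a (\<lambda>k. b k + c k) = dotK K a b + dotK K a c"
  by (simp add: dotK_def sum.distrib algebra_simps)
lemma dot_add_l: "dotK K (\<lambda>k. b k + c k) a = dotK K b a + dotK K c a"
  by (simp add: dotK_def sum.distrib algebra_simps)
lemma dot_diff_r: "dotK K a (\<lambda>k. b k - c k) = dotK K a b - dotK K a c"
  by (simp add: dotK_def sum_subtractf algebra_simps)
lemma dot_scale_r: "dotK K a (\<lambda>k. c * b k) = c * dotK K a b"
  by (simp add: dotK_def sum_distrib_left algebra_simps)
lemma dot_zero_r: "dotK K a (\<lambda>k. 0) = 0"
  by (simp add: dotK_def)

lemma dot3_zero: "(\<And>k. k \<in> {1..K} \<Longrightarrow> a k + b k + c k = 0) \<Longrightarrow>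
   dotK K a w + dotK K b w + dotK K c w = 0"
proof -
  assume H: "\<And>k. k \<in> {1..K} \<Longrightarrow> a k + b k + c k = 0"
  have "dotK K a w + dotK K b w + dotK K c w = (\<Sum>k=1..K. (a k + b k + c k) * w k)"
    by (simp add: dotK_def sum.distrib algebra_simps)
  also have "\<dots> = 0" using H by simp
  finally show ?thesis .
qed

lemma smooth_diff: "smooth_fun f \<Longrightarrow> f differentiable (at p)"
  by (erule smooth_fun.cases) (auto simp: differentiable_on_def)

lemma partial_t: "smooth_fun (\<lambda>(x, y, t). F x y t) \<Longrightarrow> (\<lambda>s. F x y s :: real) differentiable (at t0)"
proof -
  assume "smooth_fun (\<lambda>(x, y, t). F x y t)"
  then have "(\<lambda>(x, y, t). F x y t) differentiable (at (x, y, t0))" by (rule smooth_diff)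
  moreover have "(\<lambda>s. (x, y, s)) differentiable (at t0)"
    by (intro differentiable_Pair differentiable_const differentiable_ident)
  ultimately have "((\<lambda>(x, y, t). F x y t) \<circ> (\<lambda>s. (x, y, s))) differentiable (at t0)"
    by (intro differentiable_chain_at) auto
  then show ?thesis by (simp add: o_def)
qed

lemma partial_x: "smooth_fun (\<lambda>(x, y, t). F x y t) \<Longrightarrow> (\<lambda>s. F s y t :: real) differentiable (at x0)"
proof -
  assume "smooth_fun (\<lambda>(x, y, t). F x y t)"
  then have "(\<lambda>(x, y, t). F x y t) differentiable (at (x0, y, t))" by (rule smooth_diff)
  moreover have "(\<lambda>s. (s, y, t)) differentiable (at x0)"
    by (intro differentiable_Pair differentiable_const differentiable_ident)
  ultimately have "((\<lambda>(x, y, t). F x y t) \<circ> (\<lambda>s. (s, y, t))) differentiable (at x0)"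
    by (intro differentiable_chain_at) auto
  then show ?thesis by (simp add: o_def)
qed

lemma partial_y: "smooth_fun (\<lambda>(x, y, t). F x y t) \<Longrightarrow> (\<lambda>s. F x s t :: real) differentiable (at y0)"
proof -
  assume "smooth_fun (\<lambda>(x, y, t). F x y t)"
  then have "(\<lambda>(x, y, t). F x y t) differentiable (at (x, y0, t))" by (rule smooth_diff)
  moreover have "(\<lambda>s. (x, s, t)) differentiable (at y0)"
    by (intro differentiable_Pair differentiable_const differentiable_ident)
  ultimately have "((\<lambda>(x, y, t). F x y t) \<circ> (\<lambda>s. (x, s, t))) differentiable (at y0)"
    by (intro differentiable_chain_at) auto
  then show ?thesis by (simp add: o_def)
qed

lemma partial2_x: "smooth_fun (\<lambda>(x, y). F x y) \<Longrightarrow> (\<lambda>s. F s y :: real) differentiable (at x0)"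
proof -
  assume "smooth_fun (\<lambda>(x, y). F x y)"
  then have "(\<lambda>(x, y). F x y) differentiable (at (x0, y))" by (rule smooth_diff)
  moreover have "(\<lambda>s. (s, y)) differentiable (at x0)"
    by (intro differentiable_Pair differentiable_const differentiable_ident)
  ultimately have "((\<lambda>(x, y). F x y) \<circ> (\<lambda>s. (s, y))) differentiable (at x0)"
    by (intro differentiable_chain_at) auto
  then show ?thesis by (simp add: o_def)
qed

lemma partial2_y: "smooth_fun (\<lambda>(x, y). F x y) \<Longrightarrow> (\<lambda>s. F x s :: real) differentiable (at y0)"
proof -
  assume "smooth_fun (\<lambda>(x, y). F x y)"
  then have "(\<lambda>(x, y). F x y) differentiable (at (x, y0))" by (rule smooth_diff)
  moreover have "(\<lambda>s. (x, s)) differentiable (at y0)"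
    by (intro differentiable_Pair differentiable_const differentiable_ident)
  ultimately have "((\<lambda>(x, y). F x y) \<circ> (\<lambda>s. (x, s))) differentiable (at y0)"
    by (intro differentiable_chain_at) auto
  then show ?thesis by (simp add: o_def)
qed



lemma dot_Ph:
  assumes "\<And>l. l \<in> {1..K} \<Longrightarrow> mvK K (PK \<phi> \<rho> K z) a l = q l"
  shows "dotK K a (mvK K (PK \<phi> \<rho> K z) w) = dotK K q w"
proof -
  have "dotK K a (mvK K (PK \<phi> \<rho> K z) w) = dotK K w (mvK K (PK \<phi> \<rho> K z) a)" by (rule Q_sym)
  also have "\<dots> = dotK K w q" by (rule dot_cong) (auto simp: assms)
  finally show ?thesis by (simp add: dot_comm)
qed

lemma PQ: "dotK K a (mvK K (PK \<phi> \<rho> K z) a) = dotK K z (mvK K (PK \<phi> \<rho> K a) a)"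
  by (metis P_swap Q_sym)

lemma T1:
  assumes R0: "\<And>l. l \<in> {1..K} \<Longrightarrow> mvK K (PK \<phi> \<rho> K h0) u0 l = q0 l"
    and R1: "\<And>l. l \<in> {1..K} \<Longrightarrow> mvK K (PK \<phi> \<rho> K hdd) u0 l + mvK K (PK \<phi> \<rho> K h0) ud l = qd l"
  shows "dotK K q0 ud = dotK K u0 qd - dotK K hdd (mvK K (PK \<phi> \<rho> K u0) u0)"
proof -
  have "dotK K q0 ud = dotK K u0 (mvK K (PK \<phi> \<rho> K h0) ud)" by (rule dot_Ph[symmetric]) (rule R0)
  also have "\<dots> = dotK K u0 (\<lambda>l. qd l - mvK K (PK \<phi> \<rho> K hdd) u0 l)"
    by (rule dot_cong) (auto simp: R1[symmetric])
  also have "\<dots> = dotK K u0 qd - dotK K u0 (mvK K (PK \<phi> \<rho> K hdd) u0)" by (rule dot_diff_r)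
  also have "\<dots> = dotK K u0 qd - dotK K hdd (mvK K (PK \<phi> \<rho> K u0) u0)" by (simp add: PQ)
  finally show ?thesis .
qed

lemma final_alg:
  fixes a b c d e f p q r s m1 m2 n1 n2 p' q' r' s' m1' m2' n1' n2' g :: real
  assumes SX: "a + (q + p + 1/2*g*(n1 + n1)) + (s' + r') = -g*n2"
    and SY: "c + (s + r) + (q' + p' + 1/2*g*(n1' + n1')) = -g*n2'"
    and Z1: "b + q + s' = 0" and Z2: "d + s + q' = 0" and Z3: "e + m1 + m1' = 0" and Z4: "f + m2 + m2' = 0"
  shows "1/2*(a + (a - b) + (c + (c - d))) + 1/2*g*(e + e) + g*(f + 0)
    + (1/2*(p + (q + p) + (r + (s + r))) + g*(m1 + m2 + (n1 + n2)))
    + (1/2*(p' + (q' + p') + (r' + (s' + r'))) + g*(m1' + m2' + (n1' + n2'))) = 0"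
proof -
  have a: "a = -g*n2 - (q + p + 1/2*g*(n1 + n1)) - (s' + r')" using SX by linarith
  have c: "c = -g*n2' - (s + r) - (q' + p' + 1/2*g*(n1' + n1'))" using SY by linarith
  have b: "b = - q - s'" using Z1 by linarith
  have d: "d = - s - q'" using Z2 by linarith
  have e: "e = - m1 - m1'" using Z3 by linarith
  have f: "f = - m2 - m2'" using Z4 by linarith
  show ?thesis unfolding a b c d e f by (simp add: algebra_simps)
qed

theorem lemma3p3:
  fixes \<rho> :: "real^'d::finite \<Rightarrow> real"
    and \<phi> :: "nat \<Rightarrow> real^'d \<Rightarrow> real"
    and K :: nat and g :: real
    and h qx qy u v :: "real \<Rightarrow> real \<Rightarrow> real \<Rightarrow> nat \<Rightarrow> real"
    and B :: "real \<Rightarrow> real \<Rightarrow> nat \<Rightarrow> real"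
  assumes K_pos: "K \<ge> 1"
    and g_pos: "g > 0"
    and rho_meas: "\<rho> \<in> borel_measurable lborel"
    and rho_nonneg: "\<And>\<xi>. \<rho> \<xi> \<ge> 0"
    and rho_prob: "(\<integral>\<^sup>+ \<xi>. ennreal (\<rho> \<xi>) \<partial>lborel) = 1"
    and rho_moments: "\<And>\<alpha> :: 'd \<Rightarrow> nat.
        integrable lborel (\<lambda>\<xi>. (\<Prod>i\<in>UNIV. \<bar>\<xi> $ i\<bar> ^ \<alpha> i) * \<rho> \<xi>)"
    and phi_poly: "\<And>k. k \<in> {1..K} \<Longrightarrow> poly_fun (\<phi> k)"
    and phi_one: "\<phi> 1 = (\<lambda>_. 1)"
    and phi_orthonormal: "\<And>k l. k \<in> {1..K} \<Longrightarrow> l \<in> {1..K} \<Longrightarrow>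
        (\<integral>\<xi>. \<phi> k \<xi> * \<phi> l \<xi> * \<rho> \<xi> \<partial>lborel) = (if k = l then 1 else 0)"
    and h_smooth: "\<And>k. k \<in> {1..K} \<Longrightarrow> smooth_fun (\<lambda>(x, y, t). h x y t k)"
    and qx_smooth: "\<And>k. k \<in> {1..K} \<Longrightarrow> smooth_fun (\<lambda>(x, y, t). qx x y t k)"
    and qy_smooth: "\<And>k. k \<in> {1..K} \<Longrightarrow> smooth_fun (\<lambda>(x, y, t). qy x y t k)"
    and B_smooth: "\<And>k. k \<in> {1..K} \<Longrightarrow> smooth_fun (\<lambda>(x, y). B x y k)"
    and P_h_invertible: "\<And>x y t. invertibleK K (PK \<phi> \<rho> K (h x y t))"
    and u_def: "\<And>x y t. u x y t = mvK K (invK K (PK \<phi> \<rho> K (h x y t))) (qx x y t)"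
    and v_def: "\<And>x y t. v x y t = mvK K (invK K (PK \<phi> \<rho> K (h x y t))) (qy x y t)"
    and eq_h: "\<And>x y t k. k \<in> {1..K} \<Longrightarrow>
        deriv (\<lambda>s. h x y s k) t + deriv (\<lambda>s. qx s y t k) x + deriv (\<lambda>s. qy x s t k) y = 0"
    and eq_qx: "\<And>x y t k. k \<in> {1..K} \<Longrightarrow>
        deriv (\<lambda>s. qx x y s k) t
        + deriv (\<lambda>s. mvK K (PK \<phi> \<rho> K (qx s y t)) (u s y t) k
                     + 1/2 * g * mvK K (PK \<phi> \<rho> K (h s y t)) (h s y t) k) x
        + deriv (\<lambda>s. mvK K (PK \<phi> \<rho> K (qy x s t)) (u x s t) k) y
        = - g * mvK K (PK \<phi> \<rho> K (h x y t)) (\<lambda>j. deriv (\<lambda>s. B s y j) x) k"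
    and eq_qy: "\<And>x y t k. k \<in> {1..K} \<Longrightarrow>
        deriv (\<lambda>s. qy x y s k) t
        + deriv (\<lambda>s. mvK K (PK \<phi> \<rho> K (qx s y t)) (v s y t) k) x
        + deriv (\<lambda>s. mvK K (PK \<phi> \<rho> K (qy x s t)) (v x s t) k
                     + 1/2 * g * mvK K (PK \<phi> \<rho> K (h x s t)) (h x s t) k) y
        = - g * mvK K (PK \<phi> \<rho> K (h x y t)) (\<lambda>j. deriv (\<lambda>s. B x s j) y) k"
  shows "\<forall>x y t. \<exists>Et Hx Ky.
    ((\<lambda>s. 1/2 * (dotK K (qx x y s) (u x y s) + dotK K (qy x y s) (v x y s))
          + 1/2 * g * dotK K (h x y s) (h x y s) + g * dotK K (h x y s) (B x y))
       has_real_derivative Et) (at t)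
    \<and> ((\<lambda>s. 1/2 * (dotK K (u s y t) (mvK K (PK \<phi> \<rho> K (qx s y t)) (u s y t))
                   + dotK K (v s y t) (mvK K (PK \<phi> \<rho> K (qx s y t)) (v s y t)))
          + g * dotK K (qx s y t) (\<lambda>j. h s y t j + B s y j))
       has_real_derivative Hx) (at x)
    \<and> ((\<lambda>s. 1/2 * (dotK K (v x s t) (mvK K (PK \<phi> \<rho> K (qy x s t)) (v x s t))
                   + dotK K (u x s t) (mvK K (PK \<phi> \<rho> K (qy x s t)) (u x s t)))
          + g * dotK K (qy x s t) (\<lambda>j. h x s t j + B x s j))
       has_real_derivative Ky) (at y)
    \<and> Et + Hx + Ky = 0"
  apply (intro allI)
  subgoal for x y t
proof -
  let ?P = "PK \<phi> \<rho> K"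
  let ?h0 = "h x y t" and ?qx0 = "qx x y t" and ?qy0 = "qy x y t" and ?u0 = "u x y t"
    and ?v0 = "v x y t" and ?B0 = "B x y"
  let ?ht = "\<lambda>k. deriv (\<lambda>s. h x y s k) t" and ?qxt = "\<lambda>k. deriv (\<lambda>s. qx x y s k) t"
    and ?qyt = "\<lambda>k. deriv (\<lambda>s. qy x y s k) t" and ?ut = "\<lambda>k. deriv (\<lambda>s. u x y s k) t"
    and ?vt = "\<lambda>k. deriv (\<lambda>s. v x y s k) t"
  let ?hx = "\<lambda>k. deriv (\<lambda>s. h s y t k) x" and ?qxx = "\<lambda>k. deriv (\<lambda>s. qx s y t k) x"
    and ?ux = "\<lambda>k. deriv (\<lambda>s. u s y t k) x"
    and ?vx = "\<lambda>k. deriv (\<lambda>s. v s y t k) x" and ?Bx = "\<lambda>k. deriv (\<lambda>s. B s y k) x"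
  let ?hy = "\<lambda>k. deriv (\<lambda>s. h x s t k) y" and ?qyy = "\<lambda>k. deriv (\<lambda>s. qy x s t k) y"
    and ?uy = "\<lambda>k. deriv (\<lambda>s. u x s t k) y"
    and ?vy = "\<lambda>k. deriv (\<lambda>s. v x s t k) y" and ?By = "\<lambda>k. deriv (\<lambda>s. B x s k) y"

  have dh_t: "(\<lambda>s. h x y s k) differentiable (at t)" if "k \<in> {1..K}" for k
    by (rule partial_t[OF h_smooth[OF that]])
  have dqx_t: "(\<lambda>s. qx x y s k) differentiable (at t)" if "k \<in> {1..K}" for k
    by (rule partial_t[OF qx_smooth[OF that]])
  have dqy_t: "(\<lambda>s. qy x y s k) differentiable (at t)" if "k \<in> {1..K}" for k
    by (rule partial_t[OF qy_smooth[OF that]])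
  have dh_x: "(\<lambda>s. h s y t k) differentiable (at x)" if "k \<in> {1..K}" for k
    by (rule partial_x[OF h_smooth[OF that]])
  have dqx_x: "(\<lambda>s. qx s y t k) differentiable (at x)" if "k \<in> {1..K}" for k
    by (rule partial_x[OF qx_smooth[OF that]])
  have dqy_x: "(\<lambda>s. qy s y t k) differentiable (at x)" if "k \<in> {1..K}" for k
    by (rule partial_x[OF qy_smooth[OF that]])
  have dh_y: "(\<lambda>s. h x s t k) differentiable (at y)" if "k \<in> {1..K}" for k
    by (rule partial_y[OF h_smooth[OF that]])
  have dqx_y: "(\<lambda>s. qx x s t k) differentiable (at y)" if "k \<in> {1..K}" for k
    by (rule partial_y[OF qx_smooth[OF that]])
  have dqy_y: "(\<lambda>s. qy x s t k) differentiable (at y)" if "k \<in> {1..K}" for k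
    by (rule partial_y[OF qy_smooth[OF that]])
  have dB_x: "(\<lambda>s. B s y k) differentiable (at x)" if "k \<in> {1..K}" for k
    by (rule partial2_x[OF B_smooth[OF that]])
  have dB_y: "(\<lambda>s. B x s k) differentiable (at y)" if "k \<in> {1..K}" for k
    by (rule partial2_y[OF B_smooth[OF that]])

  have Dh_t: "((\<lambda>s. h x y s k) has_real_derivative ?ht k) (at t)" if "k \<in> {1..K}" for k
    using dh_t[OF that] DERIV_deriv_iff_real_differentiable by blast
  have Dqx_t: "((\<lambda>s. qx x y s k) has_real_derivative ?qxt k) (at t)" if "k \<in> {1..K}" for k
    using dqx_t[OF that] DERIV_deriv_iff_real_differentiable by blast
  have Dqy_t: "((\<lambda>s. qy x y s k) has_real_derivative ?qyt k) (at t)" if "k \<in> {1..K}" for k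
    using dqy_t[OF that] DERIV_deriv_iff_real_differentiable by blast
  have Dh_x: "((\<lambda>s. h s y t k) has_real_derivative ?hx k) (at x)" if "k \<in> {1..K}" for k
    using dh_x[OF that] DERIV_deriv_iff_real_differentiable by blast
  have Dqx_x: "((\<lambda>s. qx s y t k) has_real_derivative ?qxx k) (at x)" if "k \<in> {1..K}" for k
    using dqx_x[OF that] DERIV_deriv_iff_real_differentiable by blast
  have Dh_y: "((\<lambda>s. h x s t k) has_real_derivative ?hy k) (at y)" if "k \<in> {1..K}" for k
    using dh_y[OF that] DERIV_deriv_iff_real_differentiable by blast
  have Dqy_y: "((\<lambda>s. qy x s t k) has_real_derivative ?qyy k) (at y)" if "k \<in> {1..K}" for k
    using dqy_y[OF that] DERIV_deriv_iff_real_differentiable by blast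
  have DB_x: "((\<lambda>s. B s y k) has_real_derivative ?Bx k) (at x)" if "k \<in> {1..K}" for k
    using dB_x[OF that] DERIV_deriv_iff_real_differentiable by blast
  have DB_y: "((\<lambda>s. B x s k) has_real_derivative ?By k) (at y)" if "k \<in> {1..K}" for k
    using dB_y[OF that] DERIV_deriv_iff_real_differentiable by blast

  note Lut = line[where H="\<lambda>s. h x y s" and U="\<lambda>s. u x y s" and Q="\<lambda>s. qx x y s" and ?s0.0=t,
      OF P_h_invertible u_def dh_t dqx_t]
  note Lvt = line[where H="\<lambda>s. h x y s" and U="\<lambda>s. v x y s" and Q="\<lambda>s. qy x y s" and ?s0.0=t,
      OF P_h_invertible v_def dh_t dqy_t]
  note Lux = line[where H="\<lambda>s. h s y t" and U="\<lambda>s. u s y t" and Q="\<lambda>s. qx s y t" and ?s0.0=x,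
      OF P_h_invertible u_def dh_x dqx_x]
  note Lvx = line[where H="\<lambda>s. h s y t" and U="\<lambda>s. v s y t" and Q="\<lambda>s. qy s y t" and ?s0.0=x,
      OF P_h_invertible v_def dh_x dqy_x]
  note Luy = line[where H="\<lambda>s. h x s t" and U="\<lambda>s. u x s t" and Q="\<lambda>s. qx x s t" and ?s0.0=y,
      OF P_h_invertible u_def dh_y dqx_y]
  note Lvy = line[where H="\<lambda>s. h x s t" and U="\<lambda>s. v x s t" and Q="\<lambda>s. qy x s t" and ?s0.0=y,
      OF P_h_invertible v_def dh_y dqy_y]

  define Et where "Et = 1/2 * ((dotK K ?qxt ?u0 + dotK K ?qx0 ?ut) + (dotK K ?qyt ?v0 + dotK K ?qy0 ?vt))
      + 1/2 * g * (dotK K ?ht ?h0 + dotK K ?h0 ?ht) + g * (dotK K ?ht ?B0 + dotK K ?h0 (\<lambda>k. 0))"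
  define Hx where "Hx = 1/2 * ((dotK K ?ux (mvK K (?P ?qx0) ?u0)
        + dotK K ?u0 (\<lambda>l. mvK K (?P ?qxx) ?u0 l + mvK K (?P ?qx0) ?ux l))
      + (dotK K ?vx (mvK K (?P ?qx0) ?v0)
        + dotK K ?v0 (\<lambda>l. mvK K (?P ?qxx) ?v0 l + mvK K (?P ?qx0) ?vx l)))
      + g * (dotK K ?qxx (\<lambda>j. ?h0 j + ?B0 j) + dotK K ?qx0 (\<lambda>j. ?hx j + ?Bx j))"
  define Ky where "Ky = 1/2 * ((dotK K ?vy (mvK K (?P ?qy0) ?v0)
        + dotK K ?v0 (\<lambda>l. mvK K (?P ?qyy) ?v0 l + mvK K (?P ?qy0) ?vy l))
      + (dotK K ?uy (mvK K (?P ?qy0) ?u0)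
        + dotK K ?u0 (\<lambda>l. mvK K (?P ?qyy) ?u0 l + mvK K (?P ?qy0) ?uy l)))
      + g * (dotK K ?qyy (\<lambda>j. ?h0 j + ?B0 j) + dotK K ?qy0 (\<lambda>j. ?hy j + ?By j))"

  have dE: "((\<lambda>s. 1/2 * (dotK K (qx x y s) (u x y s) + dotK K (qy x y s) (v x y s))
          + 1/2 * g * dotK K (h x y s) (h x y s) + g * dotK K (h x y s) (B x y))
       has_real_derivative Et) (at t)"
    unfolding Et_def
    by (intro DERIV_add DERIV_cmult DERIV_dotK DERIV_const Dh_t Dqx_t Dqy_t Lut(1) Lvt(1))
  have dH: "((\<lambda>s. 1/2 * (dotK K (u s y t) (mvK K (PK \<phi> \<rho> K (qx s y t)) (u s y t))
                   + dotK K (v s y t) (mvK K (PK \<phi> \<rho> K (qx s y t)) (v s y t)))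
          + g * dotK K (qx s y t) (\<lambda>j. h s y t j + B s y j))
       has_real_derivative Hx) (at x)"
    unfolding Hx_def
    by (intro DERIV_add DERIV_cmult DERIV_dotK DERIV_PKmv Dh_x Dqx_x DB_x Lux(1) Lvx(1))
  have dK: "((\<lambda>s. 1/2 * (dotK K (v x s t) (mvK K (PK \<phi> \<rho> K (qy x s t)) (v x s t))
                   + dotK K (u x s t) (mvK K (PK \<phi> \<rho> K (qy x s t)) (u x s t)))
          + g * dotK K (qy x s t) (\<lambda>j. h x s t j + B x s j))
       has_real_derivative Ky) (at y)"
    unfolding Ky_def
    by (intro DERIV_add DERIV_cmult DERIV_dotK DERIV_PKmv Dh_y Dqy_y DB_y Luy(1) Lvy(1))

  have EQX: "?qxt k + ((mvK K (?P ?qxx) ?u0 k + mvK K (?P ?qx0) ?ux k)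
      + 1/2 * g * (mvK K (?P ?hx) ?h0 k + mvK K (?P ?h0) ?hx k))
      + (mvK K (?P ?qyy) ?u0 k + mvK K (?P ?qy0) ?uy k) = - g * mvK K (?P ?h0) ?Bx k"
    if k: "k \<in> {1..K}" for k
  proof -
    have d1: "deriv (\<lambda>s. mvK K (?P (qx s y t)) (u s y t) k + 1/2 * g * mvK K (?P (h s y t)) (h s y t) k) x
       = (mvK K (?P ?qxx) ?u0 k + mvK K (?P ?qx0) ?ux k) + 1/2 * g * (mvK K (?P ?hx) ?h0 k + mvK K (?P ?h0) ?hx k)"
      by (intro DERIV_imp_deriv DERIV_add DERIV_cmult DERIV_PKmv Dqx_x Dh_x Lux(1))
    have d2: "deriv (\<lambda>s. mvK K (?P (qy x s t)) (u x s t) k) y = mvK K (?P ?qyy) ?u0 k + mvK K (?P ?qy0) ?uy k"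
      by (intro DERIV_imp_deriv DERIV_PKmv Dqy_y Luy(1))
    show ?thesis using eq_qx[of k x y t, OF k] unfolding d1 d2 .
  qed
  have EQY: "?qyt k + (mvK K (?P ?qxx) ?v0 k + mvK K (?P ?qx0) ?vx k)
      + ((mvK K (?P ?qyy) ?v0 k + mvK K (?P ?qy0) ?vy k)
      + 1/2 * g * (mvK K (?P ?hy) ?h0 k + mvK K (?P ?h0) ?hy k)) = - g * mvK K (?P ?h0) ?By k"
    if k: "k \<in> {1..K}" for k
  proof -
    have d1: "deriv (\<lambda>s. mvK K (?P (qx s y t)) (v s y t) k) x = mvK K (?P ?qxx) ?v0 k + mvK K (?P ?qx0) ?vx k"
      by (intro DERIV_imp_deriv DERIV_PKmv Dqx_x Lvx(1))
    have d2: "deriv (\<lambda>s. mvK K (?P (qy x s t)) (v x s t) k + 1/2 * g * mvK K (?P (h x s t)) (h x s t) k) y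
       = (mvK K (?P ?qyy) ?v0 k + mvK K (?P ?qy0) ?vy k) + 1/2 * g * (mvK K (?P ?hy) ?h0 k + mvK K (?P ?h0) ?hy k)"
      by (intro DERIV_imp_deriv DERIV_add DERIV_cmult DERIV_PKmv Dqy_y Dh_y Lvy(1))
    show ?thesis using eq_qy[of k x y t, OF k] unfolding d1 d2 .
  qed
  have EQH: "?ht k + ?qxx k + ?qyy k = 0" if k: "k \<in> {1..K}" for k
    using eq_h[of k x y t, OF k] .

  have SX: "dotK K ?u0 ?qxt + ((dotK K ?u0 (mvK K (?P ?qxx) ?u0) + dotK K ?u0 (mvK K (?P ?qx0) ?ux))
      + 1/2 * g * (dotK K ?u0 (mvK K (?P ?hx) ?h0) + dotK K ?u0 (mvK K (?P ?h0) ?hx)))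
      + (dotK K ?u0 (mvK K (?P ?qyy) ?u0) + dotK K ?u0 (mvK K (?P ?qy0) ?uy))
      = - g * dotK K ?u0 (mvK K (?P ?h0) ?Bx)"
  proof -
    have "dotK K ?u0 (\<lambda>k. ?qxt k + ((mvK K (?P ?qxx) ?u0 k + mvK K (?P ?qx0) ?ux k)
      + 1/2 * g * (mvK K (?P ?hx) ?h0 k + mvK K (?P ?h0) ?hx k))
      + (mvK K (?P ?qyy) ?u0 k + mvK K (?P ?qy0) ?uy k)) = dotK K ?u0 (\<lambda>k. - g * mvK K (?P ?h0) ?Bx k)"
      by (rule dot_cong, rule refl, rule EQX, assumption)
    then show ?thesis by (simp only: dot_add_r dot_scale_r)
  qed
  have SY: "dotK K ?v0 ?qyt + (dotK K ?v0 (mvK K (?P ?qxx) ?v0) + dotK K ?v0 (mvK K (?P ?qx0) ?vx))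
      + ((dotK K ?v0 (mvK K (?P ?qyy) ?v0) + dotK K ?v0 (mvK K (?P ?qy0) ?vy))
      + 1/2 * g * (dotK K ?v0 (mvK K (?P ?hy) ?h0) + dotK K ?v0 (mvK K (?P ?h0) ?hy)))
      = - g * dotK K ?v0 (mvK K (?P ?h0) ?By)"
  proof -
    have "dotK K ?v0 (\<lambda>k. ?qyt k + (mvK K (?P ?qxx) ?v0 k + mvK K (?P ?qx0) ?vx k)
      + ((mvK K (?P ?qyy) ?v0 k + mvK K (?P ?qy0) ?vy k)
      + 1/2 * g * (mvK K (?P ?hy) ?h0 k + mvK K (?P ?h0) ?hy k))) = dotK K ?v0 (\<lambda>k. - g * mvK K (?P ?h0) ?By k)"
      by (rule dot_cong, rule refl, rule EQY, assumption)
    then show ?thesis by (simp only: dot_add_r dot_scale_r)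
  qed

  have C1: "dotK K ?u0 (mvK K (?P ?qxx) ?u0) = dotK K ?qxx (mvK K (?P ?u0) ?u0)" by (rule PQ)
  have C2: "dotK K ?u0 (mvK K (?P ?qyy) ?u0) = dotK K ?qyy (mvK K (?P ?u0) ?u0)" by (rule PQ)
  have C3: "dotK K ?u0 (mvK K (?P ?hx) ?h0) = dotK K ?qx0 ?hx"
    by (subst P_swap) (rule dot_Ph, rule Lut(2))
  have C4: "dotK K ?u0 (mvK K (?P ?h0) ?hx) = dotK K ?qx0 ?hx" by (rule dot_Ph, rule Lut(2))
  have C5: "dotK K ?u0 (mvK K (?P ?h0) ?Bx) = dotK K ?qx0 ?Bx" by (rule dot_Ph, rule Lut(2))
  have D1: "dotK K ?v0 (mvK K (?P ?qxx) ?v0) = dotK K ?qxx (mvK K (?P ?v0) ?v0)" by (rule PQ)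
  have D2: "dotK K ?v0 (mvK K (?P ?qyy) ?v0) = dotK K ?qyy (mvK K (?P ?v0) ?v0)" by (rule PQ)
  have D3: "dotK K ?v0 (mvK K (?P ?hy) ?h0) = dotK K ?qy0 ?hy"
    by (subst P_swap) (rule dot_Ph, rule Lvt(2))
  have D4: "dotK K ?v0 (mvK K (?P ?h0) ?hy) = dotK K ?qy0 ?hy" by (rule dot_Ph, rule Lvt(2))
  have D5: "dotK K ?v0 (mvK K (?P ?h0) ?By) = dotK K ?qy0 ?By" by (rule dot_Ph, rule Lvt(2))
  have E1: "dotK K ?qx0 ?ut = dotK K ?u0 ?qxt - dotK K ?ht (mvK K (?P ?u0) ?u0)"
    using Lut(2) Lut(3) by (rule T1)
  have E2: "dotK K ?qy0 ?vt = dotK K ?v0 ?qyt - dotK K ?ht (mvK K (?P ?v0) ?v0)"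
    using Lvt(2) Lvt(3) by (rule T1)
  have E3: "dotK K ?qxt ?u0 = dotK K ?u0 ?qxt" "dotK K ?qyt ?v0 = dotK K ?v0 ?qyt"
    "dotK K ?h0 ?ht = dotK K ?ht ?h0" by (rule dot_comm)+
  have E4: "dotK K ?h0 (\<lambda>k. 0) = 0" by (rule dot_zero_r)
  have H1: "dotK K ?ux (mvK K (?P ?qx0) ?u0) = dotK K ?u0 (mvK K (?P ?qx0) ?ux)"
    "dotK K ?vx (mvK K (?P ?qx0) ?v0) = dotK K ?v0 (mvK K (?P ?qx0) ?vx)"
    "dotK K ?vy (mvK K (?P ?qy0) ?v0) = dotK K ?v0 (mvK K (?P ?qy0) ?vy)"
    "dotK K ?uy (mvK K (?P ?qy0) ?u0) = dotK K ?u0 (mvK K (?P ?qy0) ?uy)"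
    by (rule Q_sym)+
  have Z1: "dotK K ?ht (mvK K (?P ?u0) ?u0) + dotK K ?qxx (mvK K (?P ?u0) ?u0) + dotK K ?qyy (mvK K (?P ?u0) ?u0) = 0"
    by (rule dot3_zero, rule EQH, assumption)
  have Z2: "dotK K ?ht (mvK K (?P ?v0) ?v0) + dotK K ?qxx (mvK K (?P ?v0) ?v0) + dotK K ?qyy (mvK K (?P ?v0) ?v0) = 0"
    by (rule dot3_zero, rule EQH, assumption)
  have Z3: "dotK K ?ht ?h0 + dotK K ?qxx ?h0 + dotK K ?qyy ?h0 = 0"
    by (rule dot3_zero, rule EQH, assumption)
  have Z4: "dotK K ?ht ?B0 + dotK K ?qxx ?B0 + dotK K ?qyy ?B0 = 0"
    by (rule dot3_zero, rule EQH, assumption)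
  have sum0: "Et + Hx + Ky = 0"
    unfolding Et_def Hx_def Ky_def dot_add_r E1 E2 E3 E4 H1 C1 C2 C3 C4 C5 D1 D2 D3 D4 D5
    by (rule final_alg[OF SX[unfolded C1 C2 C3 C4 C5] SY[unfolded D1 D2 D3 D4 D5] Z1 Z2 Z3 Z4])
  show ?thesis using dE dH dK sum0 by blast
qed
  done


end
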